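(* For every positive integer $t$, $$ma_t(t)=\frac12+\frac{\lfloor (t-1)/2\rfloor}{2t}.$$
   Context: A voter matrix with $t$ topics is a matrix $V\in\{Y,N\}^{n\times t}$ for some positive integer $n$ (rows are voters), subject to the standing assumption that in every column the number of entries $Y$ is at least the number of entries $N$. $\mathcal{V}_t$ is the set of all voter matrices with $t$ topics and any number of voters. A proposal is a vector $p\in\{Y,N\}^t$. A voter $v$ supports $p$ if the Hamming distance between $v$ and $p$ is at most $t/2$; $p$ is supported by $V$ if at least $n/2$ rows of $V$ support $p$. $md_V$ is the maximum number of entries $Y$ of a proposal supported by $V$. $m_V$ denotes the fraction of entries $Y$ among all $nt$ entries of $V$ (the average majority). For an integer $w$ with $\lceil (t+1)/2\rceil\le w\le t$, $ma_t(w)$ is the supremum of $m_V$ over all $V\in\mathcal{V}_t$ with $md_V<w$, with the convention that $ma_t(w)=\frac12$ if no such $V$ exists. *)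

theory Defs
  imports Complex_Main
begin

text \<open>A voter matrix with t topics and n voters is represented by a pair (n, V) where
  V :: nat \<Rightarrow> nat \<Rightarrow> bool, V i j = True meaning entry Y in row i (voter), column j (topic);
  only i < n and j < t are relevant. A proposal is p :: nat \<Rightarrow> bool (only j < t relevant).\<close>

definition voter_matrix :: "nat \<Rightarrow> nat \<Rightarrow> (nat \<Rightarrow> nat \<Rightarrow> bool) \<Rightarrow> bool" where
  "voter_matrix t n V \<longleftrightarrow> n > 0 \<and>
     (\<forall>j<t. card {i. i < n \<and> \<not> V i j} \<le> card {i. i < n \<and> V i j})"

definition hamming :: "nat \<Rightarrow> (nat \<Rightarrow> bool) \<Rightarrow> (nat \<Rightarrow> bool) \<Rightarrow> nat" where
  "hamming t v p = card {j. j < t \<and> v j \<noteq> p j}"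

definition voter_supports :: "nat \<Rightarrow> (nat \<Rightarrow> bool) \<Rightarrow> (nat \<Rightarrow> bool) \<Rightarrow> bool" where
  "voter_supports t v p \<longleftrightarrow> real (hamming t v p) \<le> real t / 2"

definition supported :: "nat \<Rightarrow> nat \<Rightarrow> (nat \<Rightarrow> nat \<Rightarrow> bool) \<Rightarrow> (nat \<Rightarrow> bool) \<Rightarrow> bool" where
  "supported t n V p \<longleftrightarrow> real (card {i. i < n \<and> voter_supports t (V i) p}) \<ge> real n / 2"

definition numY :: "nat \<Rightarrow> (nat \<Rightarrow> bool) \<Rightarrow> nat" where
  "numY t p = card {j. j < t \<and> p j}"

definition md :: "nat \<Rightarrow> nat \<Rightarrow> (nat \<Rightarrow> nat \<Rightarrow> bool) \<Rightarrow> nat" where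
  "md t n V = Max {numY t p | p. supported t n V p}"

definition avg_majority :: "nat \<Rightarrow> nat \<Rightarrow> (nat \<Rightarrow> nat \<Rightarrow> bool) \<Rightarrow> real" where
  "avg_majority t n V = real (card {(i, j). i < n \<and> j < t \<and> V i j}) / (real n * real t)"

definition ma :: "nat \<Rightarrow> nat \<Rightarrow> real" where
  "ma t w = (if \<exists>n V. voter_matrix t n V \<and> md t n V < w
             then Sup {avg_majority t n V | n V. voter_matrix t n V \<and> md t n V < w}
             else 1 / 2)"

end

theory Submission
  imports Defs
begin
lemma bij_mod: assumes "(t::nat) > 0" shows "bij_betw (\<lambda>x. (x + c) mod t) {..<t} {..<t}"
proof -
  have inj: "inj_on (\<lambda>x. (x + c) mod t) {..<t}"
  proof (rule inj_onI)
    fix x y assume "x \<in> {..<t}" "y \<in> {..<t}" "(x + c) mod t = (y + c) mod t"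
    then show "x = y"
    proof (cases "x \<le> y")
      case True
      have "t dvd (y + c) - (x + c)" using mod_eq_dvd_iff_nat[of "x + c" "y + c" t] \<open>(x + c) mod t = (y + c) mod t\<close> True by simp
      then have "t dvd y - x" by simp
      moreover have "y - x < t" using \<open>y \<in> {..<t}\<close> by auto
      ultimately have "y - x = 0" by (cases "y - x = 0") (auto dest: dvd_imp_le)
      then show ?thesis using True by simp
    next
      case False
      have "t dvd (x + c) - (y + c)" using mod_eq_dvd_iff_nat[of "y + c" "x + c" t] \<open>(x + c) mod t = (y + c) mod t\<close> False by simp
      then have "t dvd x - y" by simp
      moreover have "x - y < t" using \<open>x \<in> {..<t}\<close> by auto
      ultimately have "x - y = 0" by (cases "x - y = 0") (auto dest: dvd_imp_le)
      then show ?thesis using False by simp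
    qed
  qed
  have sub: "(\<lambda>x. (x + c) mod t) ` {..<t} \<subseteq> {..<t}" using assms by auto
  have "(\<lambda>x. (x + c) mod t) ` {..<t} = {..<t}" using endo_inj_surj[OF _ sub inj] by simp
  then show ?thesis using inj by (simp add: bij_betw_def)
qed

lemma card_mod_less: assumes "(t::nat) > 0" "h \<le> t"
  shows "card {x. x < t \<and> (x + c) mod t < h} = h"
proof -
  have "bij_betw (\<lambda>x. (x + c) mod t) {x. x < t \<and> (x + c) mod t < h} {..<h}"
  proof -
    have b: "bij_betw (\<lambda>x. (x + c) mod t) {..<t} {..<t}" by (rule bij_mod[OF assms(1)])
    have i: "inj_on (\<lambda>x. (x + c) mod t) {x. x < t \<and> (x + c) mod t < h}"
      using b unfolding bij_betw_def by (rule inj_on_subset[OF conjunct1]) auto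
    have "(\<lambda>x. (x + c) mod t) ` {x. x < t \<and> (x + c) mod t < h} = {..<h}"
    proof
      show "(\<lambda>x. (x + c) mod t) ` {x. x < t \<and> (x + c) mod t < h} \<subseteq> {..<h}" by auto
      show "{..<h} \<subseteq> (\<lambda>x. (x + c) mod t) ` {x. x < t \<and> (x + c) mod t < h}"
      proof
        fix y assume y: "y \<in> {..<h}"
        then have "y \<in> (\<lambda>x. (x + c) mod t) ` {..<t}" using b assms(2) unfolding bij_betw_def by auto
        then obtain x where "x < t" "y = (x + c) mod t" by auto
        then show "y \<in> (\<lambda>x. (x + c) mod t) ` {x. x < t \<and> (x + c) mod t < h}" using y by auto
      qed
    qed
    then show ?thesis using i by (simp add: bij_betw_def)
  qed
  then show ?thesis by (simp add: bij_betw_same_card)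
qed

lemma period_card: "card {i. i < t*q \<and> P (i mod t)} = q * card {i. i < (t::nat) \<and> P i}"
proof (induction q)
  case 0 then show ?case by simp
next
  case (Suc q)
  have split: "{i. i < t*Suc q \<and> P (i mod t)} = {i. i < t*q \<and> P (i mod t)} \<union> (\<lambda>x. x + t*q) ` {i. i < t \<and> P i}"
  proof (rule set_eqI, rule iffI)
    fix i assume "i \<in> {i. i < t*Suc q \<and> P (i mod t)}"
    then have i: "i < t*q + t" "P (i mod t)" by auto
    show "i \<in> {i. i < t*q \<and> P (i mod t)} \<union> (\<lambda>x. x + t*q) ` {i. i < t \<and> P i}"
    proof (cases "i < t*q")
      case True then show ?thesis using i by auto
    next
      case False
      then have "i = (i - t*q) + t*q" "i - t*q < t" using i by auto
      moreover have "(i - t*q) mod t = i mod t" using False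
        by (metis \<open>i - t*q < t\<close> add_diff_inverse_nat mod_less mod_mult_self3 mult.commute)
      ultimately show ?thesis using i
        by (metis (mono_tags, lifting) UnI2 image_eqI mem_Collect_eq mod_less)
    qed
  next
    fix i assume "i \<in> {i. i < t*q \<and> P (i mod t)} \<union> (\<lambda>x. x + t*q) ` {i. i < t \<and> P i}"
    then show "i \<in> {i. i < t*Suc q \<and> P (i mod t)}" by auto
  qed
  have disj: "{i. i < t*q \<and> P (i mod t)} \<inter> (\<lambda>x. x + t*q) ` {i. i < t \<and> P i} = {}" by auto
  have "card ((\<lambda>x. x + t*q) ` {i. i < t \<and> P i}) = card {i. i < t \<and> P i}"
    by (rule card_image) (simp add: inj_on_def)
  then show ?case using Suc split disj by (simp add: card_Un_disjoint)
qed

lemma card_pairs_rows: fixes V :: "nat \<Rightarrow> nat \<Rightarrow> bool" shows "card {(i,j). i<n \<and> j<t \<and> V i j} = (\<Sum>i<n. card {j. j<t \<and> V i j})"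
proof -
  have "{(i,j). i<n \<and> j<t \<and> V i j} = Sigma {..<n} (\<lambda>i. {j. j<t \<and> V i j})" by auto
  then show ?thesis by (simp add: card_SigmaI)
qed

lemma card_pairs_cols: fixes V :: "nat \<Rightarrow> nat \<Rightarrow> bool" shows "card {(i,j). i<n \<and> j<t \<and> V i j} = (\<Sum>j<t. card {i. i<n \<and> V i j})"
proof -
  have "{(i,j). i<n \<and> j<t \<and> V i j} = (\<lambda>(j,i). (i,j)) ` Sigma {..<t} (\<lambda>j. {i. i<n \<and> V i j})" by auto
  moreover have "inj_on (\<lambda>(j,i). (i::nat,j::nat)) (Sigma {..<t} (\<lambda>j. {i. i<n \<and> V i j}))" by (auto simp: inj_on_def)
  ultimately show ?thesis by (simp add: card_image card_SigmaI)
qed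

lemma card_split: "card {j. j<t \<and> P j} + card {j. j<(t::nat) \<and> \<not> P j} = t"
proof -
  have "{j. j<t \<and> P j} \<union> {j. j<t \<and> \<not> P j} = {..<t}" by auto
  moreover have "{j. j<t \<and> P j} \<inter> {j. j<t \<and> \<not> P j} = {}" by auto
  ultimately show ?thesis by (metis (no_types, lifting) card_Un_disjoint card_lessThan finite_Collect_conjI finite_lessThan lessThan_def finite_nat_set_iff_bounded mem_Collect_eq)
qed

lemma ham_true: "hamming t v (\<lambda>_. True) = card {j. j<t \<and> \<not> v j}"
  unfolding hamming_def by simp
lemma ham_false: "hamming t v (\<lambda>_. False) = card {j. j<t \<and> v j}"
  unfolding hamming_def by simp

lemma lower_half:
  assumes "voter_matrix t n V" "t > 0"
  shows "avg_majority t n V \<ge> 1/2"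
proof -
  have n: "n > 0" and col: "\<And>j. j<t \<Longrightarrow> card {i. i < n \<and> \<not> V i j} \<le> card {i. i < n \<and> V i j}"
    using assms(1) unfolding voter_matrix_def by auto
  have "\<And>j. j<t \<Longrightarrow> real n / 2 \<le> real (card {i. i<n \<and> V i j})"
  proof -
    fix j assume "j<t"
    have "card {i. i<n \<and> V i j} + card {i. i<n \<and> \<not> V i j} = n" by (rule card_split)
    then show "real n / 2 \<le> real (card {i. i<n \<and> V i j})" using col[OF \<open>j<t\<close>] by linarith
  qed
  then have "(\<Sum>j<t. real n / 2) \<le> (\<Sum>j<t. real (card {i. i<n \<and> V i j}))" by (intro sum_mono) auto
  then have "real t * real n / 2 \<le> real (card {(i,j). i<n \<and> j<t \<and> V i j})"
    by (simp add: card_pairs_cols[of n t V])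
  then show ?thesis unfolding avg_majority_def using n assms(2)
    by (simp add: field_simps)
qed

lemma not_supported_allY:
  assumes "md t n V < t"
  shows "\<not> supported t n V (\<lambda>_. True)"
proof
  assume sup: "supported t n V (\<lambda>_. True)"
  let ?S = "{numY t p | p. supported t n V p}"
  have "numY t (\<lambda>_. True) = t" unfolding numY_def by simp
  moreover have "numY t (\<lambda>_. True) \<in> ?S" using sup by blast
  ultimately have tS: "t \<in> ?S" by simp
  have sub: "?S \<subseteq> {..t}"
  proof
    fix x assume "x \<in> ?S"
    then obtain p where "x = numY t p" by blast
    moreover have "numY t p \<le> card {..<t}" unfolding numY_def by (rule card_mono) auto
    ultimately show "x \<in> {..t}" by simp
  qed
  have fin: "finite ?S" by (rule finite_subset[OF sub]) simp
  have "t \<le> md t n V" unfolding md_def by (rule Max_ge[OF fin tS])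
  then show False using assms by simp
qed

lemma upper:
  assumes "t > 0" "voter_matrix t n V" "md t n V < t"
  shows "avg_majority t n V < 1 - real (t div 2 + 1) / (2 * real t)"
proof -
  define h where "h = t div 2 + 1"
  define A where "A = {i. i<n \<and> voter_supports t (V i) (\<lambda>_. True)}"
  have n: "n > 0" using assms(2) unfolding voter_matrix_def by auto
  have cA: "real (card A) < real n / 2"
    using not_supported_allY[OF assms(3)] unfolding supported_def A_def by simp
  have AS: "A \<subseteq> {..<n}" unfolding A_def by auto
  have rowb: "real (card {j. j<t \<and> V i j}) \<le> real t - (if i \<in> A then 0 else real h)" if "i < n" for i
  proof -
    have sp: "card {j. j<t \<and> V i j} + card {j. j<t \<and> \<not> V i j} = t" by (rule card_split)
    show ?thesis
    proof (cases "i \<in> A")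
      case True then show ?thesis using sp by simp
    next
      case False
      then have "real (card {j. j<t \<and> \<not> V i j}) > real t / 2"
        using that unfolding A_def voter_supports_def ham_true by auto
      then have "2 * card {j. j<t \<and> \<not> V i j} > t" by linarith
      then have "card {j. j<t \<and> \<not> V i j} \<ge> h" unfolding h_def by linarith
      then show ?thesis using sp False by simp
    qed
  qed
  have "(\<Sum>i<n. real (card {j. j<t \<and> V i j})) \<le> (\<Sum>i<n. real t - (if i \<in> A then 0 else real h))"
    by (rule sum_mono) (use rowb in auto)
  also have "\<dots> = real n * real t - real h * real (card ({..<n} - A))"
  proof -
    have "(\<Sum>i<n. (if i \<in> A then 0 else real h)) = (\<Sum>i\<in>{..<n} - A. real h)"
      by (rule sum.mono_neutral_cong_right) auto
    then show ?thesis by (simp add: sum_subtractf)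
  qed
  also have "real (card ({..<n} - A)) = real n - real (card A)"
    using AS card_mono[OF _ AS] by (simp add: card_Diff_subset finite_subset of_nat_diff card_mono)
  finally have Y: "real (card {(i,j). i<n \<and> j<t \<and> V i j}) \<le> real n * real t - real h * (real n - real (card A))"
    by (simp add: card_pairs_rows)
  have "real h * (real n / 2) < real h * (real n - real (card A))"
    using cA unfolding h_def by (intro mult_strict_left_mono) auto
  then have "real (card {(i,j). i<n \<and> j<t \<and> V i j}) < real n * real t - real h * real n / 2"
    using Y by linarith
  then have "avg_majority t n V < (real n * real t - real h * real n / 2) / (real n * real t)"
    unfolding avg_majority_def using n assms(1) by (intro divide_strict_right_mono) auto
  also have "\<dots> = 1 - real h / (2 * real t)" using n assms(1) by (simp add: field_simps)
  finally show ?thesis unfolding h_def .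
qed

lemma constr:
  fixes t q :: nat
  assumes t3: "t \<ge> 3" and q1: "q \<ge> 1"
  defines "h \<equiv> t div 2 + 1"
  defines "K \<equiv> t * q"
  defines "n \<equiv> 2 * t * q - 1"
  defines "V \<equiv> (\<lambda>i j. \<not> (i < K \<and> (i + j) mod t < h))"
  shows "voter_matrix t n V \<and> md t n V < t \<and>
         avg_majority t n V = 1 - real (q * h) / real (2 * t * q - 1)"
proof -
  have t0: "t > 0" using t3 by simp
  have hlt: "h \<le> t - 1" unfolding h_def using t3 by linarith
  have K1: "K \<ge> 3" unfolding K_def using t3 q1 by (metis le_trans mult_le_mono2 mult.right_neutral)
  have nK: "n = 2 * K - 1" unfolding n_def K_def by simp
  have Kn: "K \<le> n" using nK K1 by simp
  have colN: "card {i. i < n \<and> \<not> V i j} = q * h" if "j < t" for j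
  proof -
    have "{i. i < n \<and> \<not> V i j} = {i. i < t * q \<and> (\<lambda>x. (x + j) mod t < h) (i mod t)}"
      unfolding V_def using Kn by (auto simp: K_def mod_add_left_eq)
    then show ?thesis using period_card[of t q "\<lambda>x. (x + j) mod t < h"] card_mod_less[OF t0, of h j] hlt
      by simp
  qed
  have vm: "voter_matrix t n V"
    unfolding voter_matrix_def
  proof (intro conjI allI impI)
    show "n > 0" using nK K1 by simp
    fix j assume j: "j < t"
    have sp: "card {i. i<n \<and> V i j} + card {i. i<n \<and> \<not> V i j} = n" by (rule card_split)
    have "2 * (q * h) \<le> 2 * (q * (t - 1))" using hlt by simp
    also have "\<dots> \<le> n" unfolding n_def using q1 t3 by (simp add: algebra_simps)
    finally show "card {i. i < n \<and> \<not> V i j} \<le> card {i. i < n \<and> V i j}"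
      using sp colN[OF j] by linarith
  qed
  have rowN_bad: "card {j. j < t \<and> \<not> V i j} = h" if "i < K" for i
  proof -
    have "{j. j < t \<and> \<not> V i j} = {j. j < t \<and> (j + i) mod t < h}"
      unfolding V_def using that by (auto simp: add.commute)
    then show ?thesis using card_mod_less[OF t0, of h i] hlt by simp
  qed
  have rowY_bad: "card {j. j < t \<and> V i j} = t - h" if "i < K" for i
    using card_split[of t "V i"] rowN_bad[OF that] by simp
  have rowY_good: "card {j. j < t \<and> V i j} = t" if "\<not> i < K" for i
    using that unfolding V_def by simp
  have rowN_good: "card {j. j < t \<and> \<not> V i j} = 0" if "\<not> i < K" for i
    using that unfolding V_def by simp
  have "(\<Sum>i<n. real (card {j. j<t \<and> V i j})) = (\<Sum>i<n. real t - (if i < K then real h else 0))"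
    using hlt by (intro sum.cong) (auto simp: rowY_bad rowY_good of_nat_diff)
  also have "\<dots> = real n * real t - real K * real h"
  proof -
    have "(\<Sum>i<n. (if i < K then real h else 0)) = (\<Sum>i<K. real h)"
      by (rule sum.mono_neutral_cong_right) (use Kn in auto)
    then show ?thesis by (simp add: sum_subtractf)
  qed
  finally have Y: "real (card {(i,j). i<n \<and> j<t \<and> V i j}) = real n * real t - real K * real h"
    by (simp add: card_pairs_rows)
  have avg: "avg_majority t n V = 1 - real (q * h) / real (2 * t * q - 1)"
  proof -
    have nr: "real n = real (2 * t * q - 1)" unfolding n_def by simp
    have npos: "real n > 0" using nK K1 by simp
    have "avg_majority t n V = (real n * real t - real K * real h) / (real n * real t)"
      unfolding avg_majority_def Y ..
    also have "\<dots> = 1 - real (q * h) / real n" using npos t0 unfolding K_def by (simp add: field_simps)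
    finally show ?thesis using nr by simp
  qed
  let ?S = "{numY t p | p. supported t n V p}"
  have supF: "supported t n V (\<lambda>_. False)"
  proof -
    have "{..<K} \<subseteq> {i. i < n \<and> voter_supports t (V i) (\<lambda>_. False)}"
    proof
      fix i assume i: "i \<in> {..<K}"
      have "real (t - h) \<le> real t / 2" unfolding h_def using hlt unfolding h_def by (simp add: of_nat_diff)
      then show "i \<in> {i. i < n \<and> voter_supports t (V i) (\<lambda>_. False)}"
        using i Kn rowY_bad[of i] unfolding voter_supports_def ham_false by auto
    qed
    then have "K \<le> card {i. i < n \<and> voter_supports t (V i) (\<lambda>_. False)}"
      using card_mono[of "{i. i < n \<and> voter_supports t (V i) (\<lambda>_. False)}" "{..<K}"] by simp
    moreover have "real n / 2 \<le> real K" using nK K1 by (simp add: of_nat_diff)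
    ultimately show ?thesis unfolding supported_def by linarith
  qed
  have fin: "finite ?S"
  proof (rule finite_subset)
    show "?S \<subseteq> {..t}"
    proof
      fix x assume "x \<in> ?S"
      then obtain p where "x = numY t p" by blast
      moreover have "numY t p \<le> card {..<t}" unfolding numY_def by (rule card_mono) auto
      ultimately show "x \<in> {..t}" by simp
    qed
  qed simp
  have ne: "?S \<noteq> {}" using supF by blast
  have lt: "x < t" if "x \<in> ?S" for x
  proof (rule ccontr)
    assume "\<not> x < t"
    obtain p where p: "x = numY t p" "supported t n V p" using \<open>x \<in> ?S\<close> by blast
    have le: "numY t p \<le> card {..<t}" unfolding numY_def by (rule card_mono) auto
    then have "numY t p = t" using \<open>\<not> x < t\<close> p(1) by simp
    then have "{j. j < t \<and> p j} = {..<t}"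
      unfolding numY_def by (intro card_subset_eq) auto
    then have pt: "\<And>j. j < t \<Longrightarrow> p j" by auto
    have "hamming t (V i) p = hamming t (V i) (\<lambda>_. True)" for i
      unfolding hamming_def using pt by (intro arg_cong[where f=card]) auto
    then have eqs: "{i. i < n \<and> voter_supports t (V i) p} = {i. K \<le> i \<and> i < n}"
    proof (intro set_eqI iffI)
      fix i assume "i \<in> {i. i < n \<and> voter_supports t (V i) p}"
      then have i: "i < n" "real (card {j. j<t \<and> \<not> V i j}) \<le> real t / 2"
        unfolding voter_supports_def ham_true by (auto simp: \<open>\<And>i. hamming t (V i) p = hamming t (V i) (\<lambda>_. True)\<close> ham_true)
      have "\<not> i < K"
      proof
        assume "i < K"
        then have "real h \<le> real t / 2" using i(2) rowN_bad by simp
        then show False unfolding h_def by linarith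
      qed
      then show "i \<in> {i. K \<le> i \<and> i < n}" using i by simp
    next
      fix i assume "i \<in> {i. K \<le> i \<and> i < n}"
      then show "i \<in> {i. i < n \<and> voter_supports t (V i) p}"
        unfolding voter_supports_def
        by (auto simp: \<open>\<And>i. hamming t (V i) p = hamming t (V i) (\<lambda>_. True)\<close> ham_true rowN_good)
    qed
    have "{i. K \<le> i \<and> i < n} = {K..<n}" by auto
    then have "card {i. K \<le> i \<and> i < n} = K - 1" using nK by simp
    then have "real (card {i. i < n \<and> voter_supports t (V i) p}) < real n / 2"
      using eqs nK K1 by (simp add: of_nat_diff)
    then show False using p(2) unfolding supported_def by simp
  qed
  have "md t n V < t" unfolding md_def using fin ne lt by (simp add: Max_less_iff)
  then show ?thesis using vm avg by simp
qed

theorem lemma5p8: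
  fixes t :: nat
  assumes "t > 0"
  shows "ma t t = 1 / 2 + real ((t - 1) div 2) / (2 * real t)"
proof -
  define h where "h = t div 2 + 1"
  have hsum: "(t - 1) div 2 + h = t" using assms unfolding h_def by presburger
  have Lid: "1 / 2 + real ((t - 1) div 2) / (2 * real t) = 1 - real h / (2 * real t)"
  proof -
    have "real ((t - 1) div 2) = real t - real h" using hsum by (metis add_diff_cancel_right' of_nat_add diff_add_cancel)
    then show ?thesis using assms by (simp add: field_simps)
  qed
  show ?thesis
  proof (cases "t \<le> 2")
    case True
    have ht: "h = t" using True assms unfolding h_def by auto
    have nex: "\<not> (\<exists>n V. voter_matrix t n V \<and> md t n V < t)"
    proof
      assume "\<exists>n V. voter_matrix t n V \<and> md t n V < t"
      then obtain n V where nv: "voter_matrix t n V" "md t n V < t" by blast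
      have "avg_majority t n V < 1 - real h / (2 * real t)"
        using upper[OF assms nv] unfolding h_def by simp
      also have "\<dots> = 1/2" using ht assms by simp
      finally show False using lower_half[OF nv(1) assms] by simp
    qed
    moreover have "(t - 1) div 2 = 0" using True by auto
    moreover have "ma t t = 1/2" unfolding ma_def by (rule if_not_P[OF nex])
    ultimately show ?thesis by simp
  next
    case False
    then have t3: "t \<ge> 3" by simp
    let ?S = "{avg_majority t n V | n V. voter_matrix t n V \<and> md t n V < t}"
    let ?L = "1 - real h / (2 * real t)"
    have c1: "voter_matrix t (2 * t * 1 - 1) (\<lambda>i j. \<not> (i < t * 1 \<and> (i + j) mod t < t div 2 + 1)) \<and>
        md t (2 * t * 1 - 1) (\<lambda>i j. \<not> (i < t * 1 \<and> (i + j) mod t < t div 2 + 1)) < t"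
      using constr[OF t3, of 1] by simp
    then have ex: "\<exists>n V. voter_matrix t n V \<and> md t n V < t" by blast
    then have ne: "?S \<noteq> {}" by blast
    have "Sup ?S = ?L"
    proof (rule cSup_eq_non_empty[OF ne])
      fix x assume "x \<in> ?S"
      then show "x \<le> ?L" using upper[OF assms] unfolding h_def by (auto intro: less_imp_le)
    next
      fix y assume ub: "\<And>x. x \<in> ?S \<Longrightarrow> x \<le> y"
      show "?L \<le> y"
      proof (rule ccontr)
        assume "\<not> ?L \<le> y"
        then have dpos: "?L - y > 0" by simp
        define d where "d = ?L - y"
        have d0: "d > 0" using dpos d_def by simp
        obtain q :: nat where q: "real h / d < real q" using reals_Archimedean2 by blast
        have hpos: "real h > 0" unfolding h_def by simp
        have q1: "q \<ge> 1" using q hpos d0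
          by (metis divide_pos_pos less_one not_le of_nat_0 of_nat_less_0_iff order_less_trans less_numeral_extra(3) of_nat_le_0_iff)
        define D where "D = real (2 * t * q - 1)"
        have Dr: "D = 2 * real t * real q - 1"
        proof -
          have "1 \<le> 2 * t * q" using t3 q1 by (simp add: one_le_mult_iff)
          then show ?thesis unfolding D_def by (simp add: of_nat_diff)
        qed
        have tq: "real t * real q \<ge> 3 * real q" using t3 by (intro mult_right_mono) auto
        have qr1: "real q \<ge> 1" using q1 by simp
        have Dq: "D \<ge> real q" using Dr tq qr1 by linarith
        have Dpos: "D > 0" using Dq qr1 by linarith
        have tpos: "real t > 0" using assms by simp
        have e1: "real (q * h) / D = real h / (2 * real t) + real h / (2 * real t * D)"
        proof -
          have "real q * (real t * 2) = D + 1" using Dr by simp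
          then have "real h * (real q * (real t * 2)) = real h + D * real h" by (simp add: algebra_simps)
          then show ?thesis using Dpos tpos by (simp add: field_simps)
        qed
        have e2: "real h / (2 * real t * D) \<le> real h / real q"
        proof (rule divide_left_mono)
          have t1: "1 \<le> 2 * real t" using t3 by simp
          have "1 * D \<le> (2 * real t) * D" by (rule mult_right_mono[OF t1]) (use Dpos in auto)
          then show "real q \<le> 2 * real t * D" using Dq by simp
        qed (use hpos qr1 tpos Dpos in auto)
        have e3: "real h / real q < d" using q d0 qr1 by (simp add: field_simps)
        define W where "W = (\<lambda>i j. \<not> (i < t * q \<and> (i + j) mod t < t div 2 + 1))"
        have cc: "voter_matrix t (2 * t * q - 1) W" "md t (2 * t * q - 1) W < t"
           "avg_majority t (2 * t * q - 1) W = 1 - real (q * h) / real (2 * t * q - 1)"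
          using constr[OF t3 q1] unfolding h_def W_def by auto
        have "avg_majority t (2 * t * q - 1) W \<in> ?S" using cc(1,2) by blast
        then have mem: "1 - real (q * h) / real (2 * t * q - 1) \<in> ?S" using cc(3) by simp
        have "1 - real (q * h) / real (2 * t * q - 1) > y"
        proof -
          have "real (q * h) / D < real h / (2 * real t) + d" using e1 e2 e3 by linarith
          then have "real (q * h) / D < 1 - y" using d_def by simp
          moreover have "\<And>a::real. a < 1 - y \<Longrightarrow> y < 1 - a" by linarith
          ultimately show ?thesis unfolding D_def by blast
        qed
        then show False using ub[OF mem] by simp
      qed
    qed
    then show ?thesis unfolding ma_def using ex Lid by simp
  qed
qed
end
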